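(* Let $\mathbf{w}_1,\mathbf{w}_2,\mathbf{w}_3:\mathbb{R}\to\mathbb{R}^7$ be differentiable and satisfy $\frac{d\mathbf{w}_1}{dt}=2\mathbf{w}_2\times\mathbf{w}_3$, $\frac{d\mathbf{w}_2}{dt}=2\mathbf{w}_1\times\mathbf{w}_3$, $\frac{d\mathbf{w}_3}{dt}=-2\mathbf{w}_1\times\mathbf{w}_2$. Then there exists $\gamma\in G_2$ such that $\mathbf{z}_j(t):=\gamma\mathbf{w}_j(t)$ lies in $\{0\}\oplus\mathbb{C}^3$ for all $t\in\mathbb{R}$ and $j=1,2,3$, satisfies $\omega(\mathbf{z}_j(t),\mathbf{z}_k(t))=0$ for all $j,k$ and $t$, and satisfies $\frac{d\mathbf{z}_1}{dt}=2\mathbf{z}_2\times'\mathbf{z}_3$, $\frac{d\mathbf{z}_2}{dt}=2\mathbf{z}_1\times'\mathbf{z}_3$, $\frac{d\mathbf{z}_3}{dt}=-2\mathbf{z}_1\times'\mathbf{z}_2$.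
   Context: Let $(x_1,\dots,x_7)$ be coordinates on $\mathbb{R}^7$ with Euclidean metric $g$, and write $dx_{ijk}=dx_i\wedge dx_j\wedge dx_k$. Define $\varphi=dx_{123}+dx_{145}+dx_{167}+dx_{246}-dx_{257}-dx_{347}-dx_{356}$ and $G_2=\{\gamma\in GL(7,\mathbb{R}):\gamma^*\varphi=\varphi\}$. The cross product $\times$ on $\mathbb{R}^7$ is defined by $g(u\times v,w)=\varphi(u,v,w)$. Identify $\mathbb{R}^7=\mathbb{R}\oplus\mathbb{C}^3$ via $(x_1,\dots,x_7)\mapsto(x_1,\,x_2+ix_3,\,x_4+ix_5,\,x_6+ix_7)$; then $\omega=dx_{23}+dx_{45}+dx_{67}$ is the standard symplectic form on $\mathbb{C}^3$, $\Omega=dz_1\wedge dz_2\wedge dz_3$ is the holomorphic volume form, and $\varphi=dx_1\wedge\omega+\mathrm{Re}\,\Omega$. The cross product $\times'$ on $\mathbb{C}^3$ (viewed as a real vector space) is defined by $(u\times' v)^d=(\mathrm{Re}\,\Omega)_{abc}u^av^bg^{cd}$. *)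

theory Defs
  imports "HOL-Analysis.Analysis"
begin

text \<open>R^7 is modelled as real^7. The index type 7 has the seven elements
  of_nat 1, ..., of_nat 6, of_nat 7 (= 0); coordinate x_i (i = 1..7) is coord v i.\<close>

definition coord :: "real^7 \<Rightarrow> nat \<Rightarrow> real" where
  "coord v i = v $ (of_nat i :: 7)"

text \<open>dx_i \<and> dx_j \<and> dx_k evaluated on (u,v,w): the 3x3 determinant.\<close>
definition dx3 :: "nat \<Rightarrow> nat \<Rightarrow> nat \<Rightarrow> real^7 \<Rightarrow> real^7 \<Rightarrow> real^7 \<Rightarrow> real" where
  "dx3 i j k u v w =
     coord u i * (coord v j * coord w k - coord v k * coord w j)
   - coord u j * (coord v i * coord w k - coord v k * coord w i)
   + coord u k * (coord v i * coord w j - coord v j * coord w i)"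

definition dx2 :: "nat \<Rightarrow> nat \<Rightarrow> real^7 \<Rightarrow> real^7 \<Rightarrow> real" where
  "dx2 i j u v = coord u i * coord v j - coord u j * coord v i"

definition phi :: "real^7 \<Rightarrow> real^7 \<Rightarrow> real^7 \<Rightarrow> real" where
  "phi u v w = dx3 1 2 3 u v w + dx3 1 4 5 u v w + dx3 1 6 7 u v w + dx3 2 4 6 u v w
             - dx3 2 5 7 u v w - dx3 3 4 7 u v w - dx3 3 5 6 u v w"

definition G2 :: "(real^7^7) set" where
  "G2 = {\<gamma>. invertible \<gamma> \<and> (\<forall>u v w. phi (\<gamma> *v u) (\<gamma> *v v) (\<gamma> *v w) = phi u v w)}"

text \<open>Cross product: g(u x v, w) = phi(u,v,w), i.e. (u x v)_k = phi(u,v,e_k).\<close>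
definition cross7 :: "real^7 \<Rightarrow> real^7 \<Rightarrow> real^7" where
  "cross7 u v = (\<chi> k. phi u v (axis k 1))"

definition omega :: "real^7 \<Rightarrow> real^7 \<Rightarrow> real" where
  "omega u v = dx2 2 3 u v + dx2 4 5 u v + dx2 6 7 u v"

text \<open>Complex coordinates z_1 = x_2 + i x_3, z_2 = x_4 + i x_5, z_3 = x_6 + i x_7;
  dz_j(u) is the complex number below.\<close>
definition dz :: "nat \<Rightarrow> real^7 \<Rightarrow> complex" where
  "dz j u = Complex (coord u (2*j)) (coord u (2*j+1))"

text \<open>Re Omega(u,v,w) = Re (dz1 \<and> dz2 \<and> dz3)(u,v,w) = Re det [dz_j(.)].\<close>
definition ReOmega :: "real^7 \<Rightarrow> real^7 \<Rightarrow> real^7 \<Rightarrow> real" where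
  "ReOmega u v w = Re (
      dz 1 u * (dz 2 v * dz 3 w - dz 3 v * dz 2 w)
    - dz 2 u * (dz 1 v * dz 3 w - dz 3 v * dz 1 w)
    + dz 3 u * (dz 1 v * dz 2 w - dz 2 v * dz 1 w))"

text \<open>Cross product on C^3 = {0} (+) C^3: (u x' v)^d = (Re Omega)_{abc} u^a v^b g^{cd},
  i.e. (u x' v)_d = Re Omega(u, v, e_d). Its x_1-component is automatically 0.\<close>
definition crossC :: "real^7 \<Rightarrow> real^7 \<Rightarrow> real^7" where
  "crossC u v = (\<chi> k. ReOmega u v (axis k 1))"

end

theory Submission
  imports Defs
begin


lemma univ7: "(UNIV :: 7 set) = {1, 2, 3, 4, 5, 6, 7}"
proof -
  have "card {1, 2, 3, 4, 5, 6, 7 :: 7} = card (UNIV::7 set)" by simp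
  moreover have "finite (UNIV::7 set)" by simp
  ultimately show ?thesis using card_subset_eq[of "UNIV::7 set" "{1, 2, 3, 4, 5, 6, 7 :: 7}"] by auto
qed

lemma sum7: "(\<Sum>i\<in>(UNIV::7 set). f i) = f 1 + f 2 + f 3 + f 4 + f 5 + f 6 + f 7"
  unfolding univ7 by (simp add: algebra_simps)

lemma vec7_eq: "(x::real^7) = y \<longleftrightarrow> (x$1 = y$1 \<and> x$2 = y$2 \<and> x$3 = y$3 \<and> x$4 = y$4 \<and> x$5 = y$5 \<and> x$6 = y$6 \<and> x$7 = y$7)"
proof -
  have h: "\<And>i::7. i = 1 \<or> i = 2 \<or> i = 3 \<or> i = 4 \<or> i = 5 \<or> i = 6 \<or> i = 7" using univ7 by blast
  show ?thesis unfolding vec_eq_iff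
    apply (rule iffI)
     apply simp
    apply clarify
    subgoal for i using h[of i] by auto
    done
qed

lemma inner7: "inner (x::real^7) y = x$1 * y$1 + x$2 * y$2 + x$3 * y$3 + x$4 * y$4 + x$5 * y$5 + x$6 * y$6 + x$7 * y$7"
  unfolding inner_vec_def sum7 by simp

lemma ax: "(axis i 1 :: real^7) $ j = (if j = i then 1 else 0)" by (simp add: axis_def)

lemma cross_inner: "inner (cross7 u v) w = phi u v w"
  unfolding inner7 cross7_def phi_def dx3_def by (simp add: coord_def ax) (simp add: algebra_simps)

lemma phi_alt: "phi u u w = 0"
  unfolding phi_def dx3_def by (simp add: algebra_simps)

lemma phi_cyc: "phi u v w = phi v w u"
  unfolding phi_def dx3_def by (simp add: algebra_simps)

lemma cross_self[simp]: "cross7 u u = 0"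
  by (simp add: cross7_def phi_alt vec_eq_iff)

lemma cross_anti: "cross7 u v = - cross7 v u"
  unfolding vec7_eq by (simp add: cross7_def phi_def dx3_def coord_def ax algebra_simps)

lemma cross_add_left: "cross7 (a + b) c = cross7 a c + cross7 b c"
  unfolding vec7_eq by (simp add: cross7_def phi_def dx3_def coord_def ax algebra_simps)
lemma cross_add_right: "cross7 c (a + b) = cross7 c a + cross7 c b"
  unfolding vec7_eq by (simp add: cross7_def phi_def dx3_def coord_def ax algebra_simps)
lemma cross_scale_left[simp]: "cross7 (k *\<^sub>R a) c = k *\<^sub>R cross7 a c"
  unfolding vec7_eq by (simp add: cross7_def phi_def dx3_def coord_def ax algebra_simps)
lemma cross_scale_right[simp]: "cross7 c (k *\<^sub>R a) = k *\<^sub>R cross7 c a"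
  unfolding vec7_eq by (simp add: cross7_def phi_def dx3_def coord_def ax algebra_simps)

lemma cross_bb: "bounded_bilinear cross7"
proof -
  have "bilinear cross7"
    unfolding bilinear_def
    by (auto intro!: linearI simp: cross_add_left cross_add_right)
  then show ?thesis using bilinear_conv_bounded_bilinear by blast
qed

lemma cross_cross: "cross7 x (cross7 x y) = inner x y *\<^sub>R x - inner x x *\<^sub>R y"
  unfolding vec7_eq inner7 by (simp add: cross7_def phi_def dx3_def coord_def ax) algebra

lemma omega_phi: "omega u v = phi (axis 1 1) u v"
  unfolding omega_def phi_def dx3_def dx2_def by (simp add: coord_def ax)

lemma cmult: "Complex a b * Complex c d = Complex (a*c - b*d) (a*d + b*c)"
  by (simp add: complex_eq_iff)
lemma csub: "Complex a b - Complex c d = Complex (a - c) (b - d)"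
  by (simp add: complex_eq_iff)
lemma cadd: "Complex a b + Complex c d = Complex (a + c) (b + d)"
  by (simp add: complex_eq_iff)

lemma crossC_eq: "u$1 = 0 \<Longrightarrow> v$1 = 0 \<Longrightarrow> omega u v = 0 \<Longrightarrow> crossC u v = cross7 u v"
  unfolding vec7_eq omega_def dx2_def
  by (simp add: crossC_def cross7_def ReOmega_def dz_def cmult csub cadd phi_def dx3_def coord_def ax algebra_simps)

lemma coord1: "coord x 1 = inner x (axis 1 1)"
  by (simp add: inner7 coord_def ax)


definition goodm :: "real^7^7 \<Rightarrow> bool" where
  "goodm g \<longleftrightarrow> (\<forall>x y. inner (g *v x) (g *v y) = inner x y) \<and>
     (\<forall>u v w. phi (g *v u) (g *v v) (g *v w) = phi u v w)"

lemma goodm_mult: "goodm A \<Longrightarrow> goodm B \<Longrightarrow> goodm (A ** B)"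
  unfolding goodm_def by (simp add: matrix_vector_mul_assoc[symmetric])

lemma goodm_inv: assumes "goodm g" shows "invertible g"
proof -
  have "inj ((*v) g)"
  proof (rule injI)
    fix x y assume "g *v x = g *v y"
    then have "g *v (x - y) = 0" by (simp add: matrix_vector_mult_diff_distrib)
    then have "inner (x - y) (x - y) = 0" using assms unfolding goodm_def by (metis inner_zero_left)
    then show "x = y" by simp
  qed
  then show ?thesis using invertible_left_inverse matrix_left_invertible_injective by blast
qed

lemma goodm_G2: "goodm g \<Longrightarrow> g \<in> G2"
  using goodm_inv unfolding G2_def goodm_def by blast

lemma goodm_cross: assumes "goodm g" shows "g *v cross7 u v = cross7 (g *v u) (g *v v)"
proof -
  obtain B where B: "g ** B = mat 1" using goodm_inv[OF assms] invertible_right_inverse by blast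
  have hx: "\<And>x. inner (g *v cross7 u v) (g *v x) = inner (cross7 (g *v u) (g *v v)) (g *v x)"
    using assms unfolding goodm_def by (simp add: cross_inner)
  have h: "inner (g *v cross7 u v - cross7 (g *v u) (g *v v)) y = 0" for y
  proof -
    have y: "g *v (B *v y) = y" by (simp add: matrix_vector_mul_assoc B)
    have "inner (g *v cross7 u v - cross7 (g *v u) (g *v v)) (g *v (B *v y)) = 0"
      using hx[of "B *v y"] by (simp add: inner_diff_left)
    then show ?thesis by (simp only: y)
  qed
  show ?thesis using h[of "g *v cross7 u v - cross7 (g *v u) (g *v v)"] by simp
qed

definition mk7 :: "real \<Rightarrow> real \<Rightarrow> real \<Rightarrow> real \<Rightarrow> real \<Rightarrow> real \<Rightarrow> real \<Rightarrow> real^7" where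
  "mk7 a b c d e f g = (\<chi> i. if i = 1 then a else if i = 2 then b else if i = 3 then c else if i = 4 then d
     else if i = 5 then e else if i = 6 then f else g)"
lemma mk7_simps[simp]: "mk7 a b c d e f g $ 1 = a" "mk7 a b c d e f g $ 2 = b" "mk7 a b c d e f g $ 3 = c"
  "mk7 a b c d e f g $ 4 = d" "mk7 a b c d e f g $ 5 = e" "mk7 a b c d e f g $ 6 = f" "mk7 a b c d e f g $ 7 = g"
  by (simp_all add: mk7_def)

definition mat_of :: "(real^7 \<Rightarrow> real^7) \<Rightarrow> real^7^7" where
  "mat_of F = (\<chi> i j. F (axis j 1) $ i)"

definition FA :: "real \<Rightarrow> real \<Rightarrow> real \<Rightarrow> real \<Rightarrow> real^7 \<Rightarrow> real^7" where
  "FA p q r s x = mk7 (x$1) (p * x$2 - q * x$3 + r * x$4 - s * x$5) (q * x$2 + p * x$3 + s * x$4 + r * x$5)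
      (- r * x$2 - s * x$3 + p * x$4 + q * x$5) (s * x$2 - r * x$3 - q * x$4 + p * x$5) (x$6) (x$7)"
definition FB :: "real \<Rightarrow> real \<Rightarrow> real \<Rightarrow> real \<Rightarrow> real^7 \<Rightarrow> real^7" where
  "FB p q r s x = mk7 (x$1) (p * x$2 - q * x$3 + r * x$6 - s * x$7) (q * x$2 + p * x$3 + s * x$6 + r * x$7)
      (x$4) (x$5) (- r * x$2 - s * x$3 + p * x$6 + q * x$7) (s * x$2 - r * x$3 - q * x$6 + p * x$7)"
definition FC :: "real \<Rightarrow> real \<Rightarrow> real^7 \<Rightarrow> real^7" where
  "FC c s x = mk7 (c * x$1 + s * x$2) (- s * x$1 + c * x$2) (x$3) (c * x$4 + s * x$7) (x$5) (x$6) (- s * x$4 + c * x$7)"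

lemma FA_mat: "mat_of (FA p q r s) *v x = FA p q r s x"
  unfolding vec7_eq by (simp add: matrix_vector_mult_def mat_of_def sum7 FA_def ax)
lemma FB_mat: "mat_of (FB p q r s) *v x = FB p q r s x"
  unfolding vec7_eq by (simp add: matrix_vector_mult_def mat_of_def sum7 FB_def ax)
lemma FC_mat: "mat_of (FC c s) *v x = FC c s x"
  unfolding vec7_eq by (simp add: matrix_vector_mult_def mat_of_def sum7 FC_def ax)

lemma FA_good: assumes "p * p + q * q + r * r + s * s = 1" shows "goodm (mat_of (FA p q r s))"
proof -
  have "inner (FA p q r s x) (FA p q r s y) = inner x y" for x y
    using assms unfolding inner7 FA_def mk7_simps by algebra
  moreover have "phi (FA p q r s u) (FA p q r s v) (FA p q r s w) = phi u v w" for u v w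
    using assms unfolding phi_def dx3_def coord_def apply (simp add: FA_def) by algebra
  ultimately show ?thesis unfolding goodm_def FA_mat by simp
qed
lemma FB_good: assumes "p * p + q * q + r * r + s * s = 1" shows "goodm (mat_of (FB p q r s))"
proof -
  have "inner (FB p q r s x) (FB p q r s y) = inner x y" for x y
    using assms unfolding inner7 FB_def mk7_simps by algebra
  moreover have "phi (FB p q r s u) (FB p q r s v) (FB p q r s w) = phi u v w" for u v w
    using assms unfolding phi_def dx3_def coord_def apply (simp add: FB_def) by algebra
  ultimately show ?thesis unfolding goodm_def FB_mat by simp
qed
lemma FC_good: assumes "c * c + s * s = 1" shows "goodm (mat_of (FC c s))"
proof -
  have "inner (FC c s x) (FC c s y) = inner x y" for x y
    using assms unfolding inner7 FC_def mk7_simps by algebra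
  moreover have "phi (FC c s u) (FC c s v) (FC c s w) = phi u v w" for u v w
    using assms unfolding phi_def dx3_def coord_def apply (simp add: FC_def) by algebra
  ultimately show ?thesis unfolding goodm_def FC_mat by simp
qed

lemma su2_exists:
  fixes a b c d :: real
  shows "\<exists>p q r s. p * p + q * q + r * r + s * s = 1 \<and>
    p * a - q * b + r * c - s * d = sqrt (a*a + b*b + c*c + d*d) \<and> q * a + p * b + s * c + r * d = 0 \<and>
    - r * a - s * b + p * c + q * d = 0 \<and> s * a - r * b - q * c + p * d = 0"
proof (cases "a*a + b*b + c*c + d*d = 0")
  case True
  have sq: "a*a \<ge> 0" "b*b \<ge> 0" "c*c \<ge> 0" "d*d \<ge> 0" by simp_all
  then have "a*a = 0" "b*b = 0" "c*c = 0" "d*d = 0" using True by linarith+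
  then have "a = 0 \<and> b = 0 \<and> c = 0 \<and> d = 0" by simp
  then show ?thesis by (intro exI[of _ 1] exI[of _ 0]) simp
next
  case False
  define R where "R = sqrt (a*a + b*b + c*c + d*d)"
  have sq: "a*a \<ge> 0" "b*b \<ge> 0" "c*c \<ge> 0" "d*d \<ge> 0" by simp_all
  then have pos: "a*a + b*b + c*c + d*d > 0" using False by linarith
  then have R0: "R > 0" and R2: "R * R = a*a + b*b + c*c + d*d" unfolding R_def by auto
  show ?thesis
    apply (rule exI[of _ "a / R"], rule exI[of _ "- b / R"], rule exI[of _ "c / R"], rule exI[of _ "- d / R"])
    using R0 R2 pos unfolding R_def[symmetric] by (auto simp: field_simps add_divide_distrib[symmetric])
qed

lemma reach: assumes "norm (n::real^7) = 1" shows "\<exists>g. goodm g \<and> g *v n = axis 1 1"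
proof -
  obtain p q r s where pqrs: "p * p + q * q + r * r + s * s = 1"
    "p * n$2 - q * n$3 + r * n$4 - s * n$5 = sqrt (n$2*n$2 + n$3*n$3 + n$4*n$4 + n$5*n$5)"
    "q * n$2 + p * n$3 + s * n$4 + r * n$5 = 0"
    "- r * n$2 - s * n$3 + p * n$4 + q * n$5 = 0" "s * n$2 - r * n$3 - q * n$4 + p * n$5 = 0"
    using su2_exists by blast
  define R1 where "R1 = sqrt (n$2*n$2 + n$3*n$3 + n$4*n$4 + n$5*n$5)"
  have R1sq: "R1 * R1 = n$2*n$2 + n$3*n$3 + n$4*n$4 + n$5*n$5" unfolding R1_def
    by (simp add: add_nonneg_nonneg)
  have m1: "FA p q r s n = mk7 (n$1) R1 0 0 0 (n$6) (n$7)"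
    using pqrs unfolding vec7_eq FA_def R1_def by simp
  obtain p' q' r' s' where pqrs': "p' * p' + q' * q' + r' * r' + s' * s' = 1"
    "p' * R1 - q' * 0 + r' * n$6 - s' * n$7 = sqrt (R1*R1 + 0*0 + n$6*n$6 + n$7*n$7)"
    "q' * R1 + p' * 0 + s' * n$6 + r' * n$7 = 0"
    "- r' * R1 - s' * 0 + p' * n$6 + q' * n$7 = 0" "s' * R1 - r' * 0 - q' * n$6 + p' * n$7 = 0"
    using su2_exists by blast
  define R2 where "R2 = sqrt (R1*R1 + 0*0 + n$6*n$6 + n$7*n$7)"
  have R2sq: "R2 * R2 = R1*R1 + n$6*n$6 + n$7*n$7" unfolding R2_def
    by (simp add: add_nonneg_nonneg)
  have m2: "FB p' q' r' s' (mk7 (n$1) R1 0 0 0 (n$6) (n$7)) = mk7 (n$1) R2 0 0 0 0 0"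
    using pqrs' unfolding vec7_eq FB_def R2_def by simp
  have nn: "inner n n = 1" using assms power2_norm_eq_inner[of n] by simp
  have cs: "n$1 * n$1 + R2 * R2 = 1" using nn unfolding inner7 R2sq R1sq by simp
  have m3: "FC (n$1) R2 (mk7 (n$1) R2 0 0 0 0 0) = axis 1 1"
    using cs unfolding vec7_eq FC_def by (simp add: ax algebra_simps)
  define g where "g = mat_of (FC (n$1) R2) ** mat_of (FB p' q' r' s') ** mat_of (FA p q r s)"
  have "goodm g" unfolding g_def using FA_good FB_good FC_good pqrs(1) pqrs'(1) cs goodm_mult by simp
  moreover have "g *v n = axis 1 1"
    unfolding g_def by (simp add: matrix_vector_mul_assoc[symmetric] FA_mat FB_mat FC_mat m1 m2 m3)
  ultimately show ?thesis by blast
qed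


lemma gron:
  fixes E E' :: "real \<Rightarrow> real"
  assumes der: "\<And>t. (E has_real_derivative E' t) (at t)"
    and nonneg: "\<And>t. E t \<ge> 0" and E0: "E 0 = 0"
    and bnd: "\<And>t. t \<in> {-T..T} \<Longrightarrow> \<bar>E' t\<bar> \<le> C * E t"
    and t: "t \<in> {-T..T}"
  shows "E t = 0"
proof (cases "t \<ge> 0")
  case True
  have "(\<lambda>s. E s * exp (- C * s)) 0 \<ge> (\<lambda>s. E s * exp (- C * s)) t"
  proof (rule DERIV_nonpos_imp_nonincreasing[OF True])
    fix x assume x: "0 \<le> x" "x \<le> t"
    have d: "((\<lambda>s. E s * exp (- C * s)) has_real_derivative
        (E' x * exp (- C * x) + E x * (exp (- C * x) * (- C)))) (at x)"
      by (auto intro!: derivative_eq_intros der)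
    have "E' x \<le> C * E x" using bnd[of x] x t by auto
    then have "(E' x - C * E x) * exp (- C * x) \<le> 0"
      by (simp add: mult_nonpos_nonneg)
    then show "\<exists>y. ((\<lambda>s. E s * exp (- C * s)) has_real_derivative y) (at x) \<and> y \<le> 0"
      using d by (intro exI[of _ "E' x * exp (- C * x) + E x * (exp (- C * x) * (- C))"])
        (auto simp: algebra_simps)
  qed
  then have "E t * exp (- C * t) \<le> 0" using E0 by simp
  then have "E t \<le> 0" by (simp add: mult_le_0_iff)
  then show ?thesis using nonneg[of t] by simp
next
  case False
  then have tl: "t \<le> 0" by simp
  have "(\<lambda>s. E s * exp (C * s)) t \<le> (\<lambda>s. E s * exp (C * s)) 0"
  proof (rule DERIV_nonneg_imp_nondecreasing[OF tl])
    fix x assume x: "t \<le> x" "x \<le> 0"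
    have d: "((\<lambda>s. E s * exp (C * s)) has_real_derivative
        (E' x * exp (C * x) + E x * (exp (C * x) * C))) (at x)"
      by (auto intro!: derivative_eq_intros der)
    have "- E' x \<le> C * E x" using bnd[of x] x t by auto
    then have "(E' x + C * E x) * exp (C * x) \<ge> 0"
      by simp
    then show "\<exists>y. ((\<lambda>s. E s * exp (C * s)) has_real_derivative y) (at x) \<and> y \<ge> 0"
      using d by (intro exI[of _ "E' x * exp (C * x) + E x * (exp (C * x) * C)"])
        (auto simp: algebra_simps)
  qed
  then have "E t * exp (C * t) \<le> 0" using E0 by simp
  then have "E t \<le> 0" by (simp add: mult_le_0_iff)
  then show ?thesis using nonneg[of t] by simp
qed

lemma hb: fixes k K x y S :: real
  assumes "\<bar>k\<bar> \<le> K" "x*x + y*y \<le> S" shows "\<bar>k*x*y\<bar> \<le> K * S / 2"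
proof -
  have "0 \<le> (\<bar>x\<bar> - \<bar>y\<bar>) * (\<bar>x\<bar> - \<bar>y\<bar>)" by simp
  then have "\<bar>x*y\<bar> \<le> (x*x + y*y) / 2" by (simp add: abs_mult algebra_simps)
  also have "\<dots> \<le> S / 2" using assms(2) by simp
  finally have xy: "\<bar>x*y\<bar> \<le> S / 2" .
  have "\<bar>k*x*y\<bar> = \<bar>k\<bar> * \<bar>x*y\<bar>" by (simp add: abs_mult)
  also have "\<dots> \<le> K * (S/2)" using xy assms(1) by (intro mult_mono) auto
  finally show ?thesis by simp
qed

lemma ebound:
  fixes a1 a2 a3 b1 b2 b3 g11 g22 g33 g12 g13 g23 B :: real
  assumes "\<bar>g11\<bar> \<le> B" "\<bar>g22\<bar> \<le> B" "\<bar>g33\<bar> \<le> B" "\<bar>g12\<bar> \<le> B" "\<bar>g13\<bar> \<le> B" "\<bar>g23\<bar> \<le> B"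
  shows "\<bar>2*a1*(2*b1) + 2*a2*(2*b2) + 2*a3*(-2*b3)
     + 2*b1*(2*(-g33*a1 + g13*a3) - 2*(g22*a1 - g12*a2))
     + 2*b2*(2*(-g33*a2 + g23*a3) - 2*(-g11*a2 + g12*a1))
     + 2*b3*(2*(g22*a3 - g23*a2) + 2*(-g11*a3 + g13*a1))\<bar>
     \<le> (6 + 24*B) * (a1*a1 + a2*a2 + a3*a3 + b1*b1 + b2*b2 + b3*b3)"
proof -
  define S where "S = a1*a1 + a2*a2 + a3*a3 + b1*b1 + b2*b2 + b3*b3"
  have sq: "a1*a1 \<ge> 0" "a2*a2 \<ge> 0" "a3*a3 \<ge> 0" "b1*b1 \<ge> 0" "b2*b2 \<ge> 0" "b3*b3 \<ge> 0" by simp_all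
  have p: "a1*a1 + b1*b1 \<le> S" "a2*a2 + b2*b2 \<le> S" "a3*a3 + b3*b3 \<le> S"
    "a1*a1 + b2*b2 \<le> S" "a1*a1 + b3*b3 \<le> S" "a2*a2 + b1*b1 \<le> S" "a2*a2 + b3*b3 \<le> S"
    "a3*a3 + b1*b1 \<le> S" "a3*a3 + b2*b2 \<le> S"
    unfolding S_def using sq by linarith+
  have c4: "\<bar>4::real\<bar> \<le> 4" by simp
  have g: "\<bar>4*g11\<bar> \<le> 4*B" "\<bar>4*g22\<bar> \<le> 4*B" "\<bar>4*g33\<bar> \<le> 4*B" "\<bar>4*g12\<bar> \<le> 4*B"
    "\<bar>4*g13\<bar> \<le> 4*B" "\<bar>4*g23\<bar> \<le> 4*B" using assms by (simp_all add: abs_mult)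
  have e: "2*a1*(2*b1) + 2*a2*(2*b2) + 2*a3*(-2*b3)
     + 2*b1*(2*(-g33*a1 + g13*a3) - 2*(g22*a1 - g12*a2))
     + 2*b2*(2*(-g33*a2 + g23*a3) - 2*(-g11*a2 + g12*a1))
     + 2*b3*(2*(g22*a3 - g23*a2) + 2*(-g11*a3 + g13*a1))
     = 4*a1*b1 + 4*a2*b2 - 4*a3*b3 - 4*g33*a1*b1 + 4*g13*a3*b1 - 4*g22*a1*b1 + 4*g12*a2*b1
       - 4*g33*a2*b2 + 4*g23*a3*b2 + 4*g11*a2*b2 - 4*g12*a1*b2
       + 4*g22*a3*b3 - 4*g23*a2*b3 - 4*g11*a3*b3 + 4*g13*a1*b3"
    by algebra
  note t1 = hb[OF c4 p(1)] hb[OF c4 p(2)] hb[OF c4 p(3)]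
  note t2 = hb[OF g(3) p(1)] hb[OF g(5) p(8)] hb[OF g(2) p(1)] hb[OF g(4) p(6)]
      hb[OF g(3) p(2)] hb[OF g(6) p(9)] hb[OF g(1) p(2)] hb[OF g(4) p(4)]
      hb[OF g(2) p(3)] hb[OF g(6) p(7)] hb[OF g(1) p(3)] hb[OF g(5) p(5)]
  have "(6 + 24*B) * S = 3*(4*S/2) + 12*(4*B*S/2)" by (simp add: algebra_simps)
  then show ?thesis unfolding e S_def[symmetric] using t1 t2 unfolding abs_le_iff by linarith
qed

lemma inner_le2: "\<bar>inner (x::real^7) y\<bar> \<le> norm x ^ 2 + norm y ^ 2"
proof -
  have "\<bar>inner x y\<bar> \<le> norm x * norm y" by (rule Cauchy_Schwarz_ineq2)
  moreover have "0 \<le> (norm x - norm y)^2" by simp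
  then have "2 * (norm x * norm y) \<le> norm x ^ 2 + norm y ^ 2"
    by (simp add: power2_diff)
  moreover have "0 \<le> norm x * norm y" by simp
  ultimately show ?thesis by linarith
qed

lemma cross_minus_right: "cross7 a (- b) = - cross7 a b"
  using cross_scale_right[of a "-1" b] by simp
lemma cross_minus_left: "cross7 (- a) b = - cross7 a b"
  using cross_scale_left[of "-1" a b] by simp

lemma cc2: "cross7 (cross7 a b) b = inner b a *\<^sub>R b - inner b b *\<^sub>R a"
proof -
  have "cross7 (cross7 a b) b = - cross7 b (cross7 a b)" by (rule cross_anti)
  also have "\<dots> = cross7 b (cross7 b a)" using cross_anti[of a b] by (simp add: cross_minus_right)
  finally show ?thesis by (simp add: cross_cross)
qed
lemma cc3: "cross7 b (cross7 a b) = inner b b *\<^sub>R a - inner b a *\<^sub>R b"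
proof -
  have "cross7 b (cross7 a b) = - cross7 b (cross7 b a)" using cross_anti[of a b] by (simp add: cross_minus_right)
  then show ?thesis by (simp add: cross_cross)
qed
lemma cc4: "cross7 (cross7 a b) a = inner a a *\<^sub>R b - inner a b *\<^sub>R a"
proof -
  have "cross7 (cross7 a b) a = - cross7 a (cross7 a b)" by (rule cross_anti)
  then show ?thesis by (simp add: cross_cross)
qed



theorem mainTheorem4:
  fixes w1 w2 w3 :: "real \<Rightarrow> real^7"
  assumes d1: "\<And>t. (w1 has_vector_derivative (2 *\<^sub>R cross7 (w2 t) (w3 t))) (at t)"
      and d2: "\<And>t. (w2 has_vector_derivative (2 *\<^sub>R cross7 (w1 t) (w3 t))) (at t)"
      and d3: "\<And>t. (w3 has_vector_derivative (- 2 *\<^sub>R cross7 (w1 t) (w2 t))) (at t)"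
  shows "\<exists>\<gamma>\<in>G2.
    (\<forall>t. \<forall>w\<in>{w1, w2, w3}. coord (\<gamma> *v w t) 1 = 0) \<and>
    (\<forall>t. \<forall>w\<in>{w1, w2, w3}. \<forall>w'\<in>{w1, w2, w3}. omega (\<gamma> *v w t) (\<gamma> *v w' t) = 0) \<and>
    (\<forall>t. ((\<lambda>s. \<gamma> *v w1 s) has_vector_derivative
            (2 *\<^sub>R crossC (\<gamma> *v w2 t) (\<gamma> *v w3 t))) (at t)) \<and>
    (\<forall>t. ((\<lambda>s. \<gamma> *v w2 s) has_vector_derivative
            (2 *\<^sub>R crossC (\<gamma> *v w1 t) (\<gamma> *v w3 t))) (at t)) \<and>
    (\<forall>t. ((\<lambda>s. \<gamma> *v w3 s) has_vector_derivative
            (- 2 *\<^sub>R crossC (\<gamma> *v w1 t) (\<gamma> *v w2 t))) (at t))"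
proof -
  define S where "S = set [w1 0, w2 0, w3 0, cross7 (w2 0) (w3 0), cross7 (w1 0) (w3 0), cross7 (w1 0) (w2 0)]"
  have "dim S \<le> card S" unfolding S_def by (rule dim_le_card') simp
  also have "card S \<le> 6" unfolding S_def by (rule order_trans[OF card_length]) simp
  finally have dS: "dim S < DIM(real^7)" by simp
  obtain x where x0: "x \<noteq> 0" and xo: "\<And>y. y \<in> span S \<Longrightarrow> orthogonal x y"
    using orthogonal_to_subspace_exists[OF dS] by blast
  define n where "n = x /\<^sub>R norm x"
  have nn: "norm n = 1" unfolding n_def using x0 by simp
  have n0: "inner n y = 0" if "y \<in> S" for y
  proof -
    have "inner x y = 0" using xo[OF span_base[OF that]] by (simp add: orthogonal_def)
    then show ?thesis unfolding n_def by simp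
  qed
  define a1 where "a1 t = inner n (w1 t)" for t
  define a2 where "a2 t = inner n (w2 t)" for t
  define a3 where "a3 t = inner n (w3 t)" for t
  define b1 where "b1 t = inner n (cross7 (w2 t) (w3 t))" for t
  define b2 where "b2 t = inner n (cross7 (w1 t) (w3 t))" for t
  define b3 where "b3 t = inner n (cross7 (w1 t) (w2 t))" for t
  define g11 where "g11 t = inner (w1 t) (w1 t)" for t
  define g22 where "g22 t = inner (w2 t) (w2 t)" for t
  define g33 where "g33 t = inner (w3 t) (w3 t)" for t
  define g12 where "g12 t = inner (w1 t) (w2 t)" for t
  define g13 where "g13 t = inner (w1 t) (w3 t)" for t
  define g23 where "g23 t = inner (w2 t) (w3 t)" for t
  have bli: "bounded_linear (inner n)" by (rule bounded_linear_inner_right)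
  have da1: "(a1 has_real_derivative 2 * b1 t) (at t)" for t
    using bounded_linear.has_vector_derivative[OF bli d1[of t]]
    unfolding has_real_derivative_iff_has_vector_derivative a1_def[abs_def] b1_def by simp
  have da2: "(a2 has_real_derivative 2 * b2 t) (at t)" for t
    using bounded_linear.has_vector_derivative[OF bli d2[of t]]
    unfolding has_real_derivative_iff_has_vector_derivative a2_def[abs_def] b2_def by simp
  have da3: "(a3 has_real_derivative - 2 * b3 t) (at t)" for t
    using bounded_linear.has_vector_derivative[OF bli d3[of t]]
    unfolding has_real_derivative_iff_has_vector_derivative a3_def[abs_def] b3_def by simp
  have db1: "(b1 has_real_derivative
      2*(- g33 t * a1 t + g13 t * a3 t) - 2*(g22 t * a1 t - g12 t * a2 t)) (at t)" for t
    using bounded_linear.has_vector_derivative[OF bli bounded_bilinear.has_vector_derivative[OF cross_bb d2[of t] d3[of t]]]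
    unfolding has_real_derivative_iff_has_vector_derivative b1_def[abs_def]
    by (simp add: cross_minus_right cross_minus_left cross_add_left cross_add_right cc2 cc3 inner_add_right inner_diff_right
        a1_def a2_def a3_def g33_def g13_def g22_def g12_def inner_commute algebra_simps)
  have db2: "(b2 has_real_derivative
      2*(- g33 t * a2 t + g23 t * a3 t) - 2*(- g11 t * a2 t + g12 t * a1 t)) (at t)" for t
    using bounded_linear.has_vector_derivative[OF bli bounded_bilinear.has_vector_derivative[OF cross_bb d1[of t] d3[of t]]]
    unfolding has_real_derivative_iff_has_vector_derivative b2_def[abs_def]
    by (simp add: cross_minus_right cross_minus_left cross_add_left cross_add_right cc2 cross_cross inner_add_right inner_diff_right
        a1_def a2_def a3_def g33_def g23_def g11_def g12_def inner_commute algebra_simps)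
  have db3: "(b3 has_real_derivative
      2*(g22 t * a3 t - g23 t * a2 t) + 2*(- g11 t * a3 t + g13 t * a1 t)) (at t)" for t
    using bounded_linear.has_vector_derivative[OF bli bounded_bilinear.has_vector_derivative[OF cross_bb d1[of t] d2[of t]]]
    unfolding has_real_derivative_iff_has_vector_derivative b3_def[abs_def]
    by (simp add: cross_minus_right cross_minus_left cross_add_left cross_add_right cc4 cross_cross inner_add_right inner_diff_right
        a1_def a2_def a3_def g22_def g23_def g11_def g13_def inner_commute algebra_simps)
  define E where "E t = a1 t * a1 t + a2 t * a2 t + a3 t * a3 t + b1 t * b1 t + b2 t * b2 t + b3 t * b3 t" for t
  define E' where "E' t = 2*a1 t*(2*b1 t) + 2*a2 t*(2*b2 t) + 2*a3 t*(-2*b3 t)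
     + 2*b1 t*(2*(-g33 t*a1 t + g13 t*a3 t) - 2*(g22 t*a1 t - g12 t*a2 t))
     + 2*b2 t*(2*(-g33 t*a2 t + g23 t*a3 t) - 2*(-g11 t*a2 t + g12 t*a1 t))
     + 2*b3 t*(2*(g22 t*a3 t - g23 t*a2 t) + 2*(-g11 t*a3 t + g13 t*a1 t))" for t
  have dE: "(E has_real_derivative E' t) (at t)" for t
  proof -
    have "((\<lambda>t. a1 t * a1 t + a2 t * a2 t + a3 t * a3 t + b1 t * b1 t + b2 t * b2 t + b3 t * b3 t)
      has_real_derivative E' t) (at t)"
      unfolding E'_def
      by (rule derivative_eq_intros da1 da2 da3 db1 db2 db3 refl)+ (simp add: algebra_simps)
    then show ?thesis unfolding E_def[abs_def] .
  qed
  have Enn: "E t \<ge> 0" for t unfolding E_def by simp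
  have E0: "E 0 = 0"
    unfolding E_def a1_def a2_def a3_def b1_def b2_def b3_def using n0 unfolding S_def by simp
  have cw: "continuous_on {-T..T} w" if "\<And>t. (w has_vector_derivative w' t) (at t)" for w :: "real \<Rightarrow> real^7" and w' T
    by (rule continuous_on_vector_derivative) (rule has_vector_derivative_at_within[OF that])
  have Ez: "E t = 0" for t
  proof -
    define T where "T = \<bar>t\<bar>"
    have cN: "continuous_on {-T..T} (\<lambda>s. norm (w1 s) ^ 2 + norm (w2 s) ^ 2 + norm (w3 s) ^ 2)"
      by (intro continuous_intros cw[OF d1] cw[OF d2] cw[OF d3])
    obtain s0 where s0: "s0 \<in> {-T..T}" and smax: "\<And>s. s \<in> {-T..T} \<Longrightarrow>
        norm (w1 s) ^ 2 + norm (w2 s) ^ 2 + norm (w3 s) ^ 2 \<le> norm (w1 s0) ^ 2 + norm (w2 s0) ^ 2 + norm (w3 s0) ^ 2"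
      using continuous_attains_sup[OF compact_Icc _ cN] T_def by force
    define B where "B = 2 * (norm (w1 s0) ^ 2 + norm (w2 s0) ^ 2 + norm (w3 s0) ^ 2)"
    have bnd: "\<bar>E' s\<bar> \<le> (6 + 24 * B) * E s" if s: "s \<in> {-T..T}" for s
    proof -
      have N: "norm (w1 s) ^ 2 + norm (w2 s) ^ 2 + norm (w3 s) ^ 2 \<le> B / 2" using smax[OF s] B_def by simp
      have n2: "0 \<le> norm (w1 s) ^ 2" "0 \<le> norm (w2 s) ^ 2" "0 \<le> norm (w3 s) ^ 2" by simp_all
      have "\<bar>g11 s\<bar> \<le> B" unfolding g11_def using inner_le2[of "w1 s" "w1 s"] N n2 by linarith
      moreover have "\<bar>g22 s\<bar> \<le> B" unfolding g22_def using inner_le2[of "w2 s" "w2 s"] N n2 by linarith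
      moreover have "\<bar>g33 s\<bar> \<le> B" unfolding g33_def using inner_le2[of "w3 s" "w3 s"] N n2 by linarith
      moreover have "\<bar>g12 s\<bar> \<le> B" unfolding g12_def using inner_le2[of "w1 s" "w2 s"] N n2 by linarith
      moreover have "\<bar>g13 s\<bar> \<le> B" unfolding g13_def using inner_le2[of "w1 s" "w3 s"] N n2 by linarith
      moreover have "\<bar>g23 s\<bar> \<le> B" unfolding g23_def using inner_le2[of "w2 s" "w3 s"] N n2 by linarith
      ultimately show ?thesis unfolding E'_def E_def by (rule ebound)
    qed
    show ?thesis by (rule gron[OF dE Enn E0 bnd]) (auto simp: T_def)
  qed
  have zero: "a1 t = 0 \<and> a2 t = 0 \<and> a3 t = 0 \<and> b1 t = 0 \<and> b2 t = 0 \<and> b3 t = 0" for t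
  proof -
    have "a1 t * a1 t + a2 t * a2 t + a3 t * a3 t + b1 t * b1 t + b2 t * b2 t + b3 t * b3 t = 0"
      using Ez[of t] unfolding E_def .
    moreover have "a1 t * a1 t \<ge> 0" "a2 t * a2 t \<ge> 0" "a3 t * a3 t \<ge> 0"
      "b1 t * b1 t \<ge> 0" "b2 t * b2 t \<ge> 0" "b3 t * b3 t \<ge> 0" by simp_all
    ultimately have "a1 t * a1 t = 0" "a2 t * a2 t = 0" "a3 t * a3 t = 0"
      "b1 t * b1 t = 0" "b2 t * b2 t = 0" "b3 t * b3 t = 0" by linarith+
    then show ?thesis by simp
  qed
  obtain g where gg: "goodm g" and gn: "g *v n = axis 1 1" using reach[OF nn] by blast
  have gin: "inner (g *v u) (g *v v) = inner u v" for u v using gg unfolding goodm_def by blast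
  have gphi: "phi (g *v u) (g *v v) (g *v w) = phi u v w" for u v w using gg unfolding goodm_def by blast
  have gcoord: "coord (g *v u) 1 = inner n u" for u
    unfolding coord1 gn[symmetric] gin by (simp add: inner_commute)
  have gcoord': "coord (g *v u) (Suc 0) = inner n u" for u using gcoord[of u] by simp
  have gom: "omega (g *v u) (g *v v) = inner n (cross7 u v)" for u v
  proof -
    have "omega (g *v u) (g *v v) = phi (g *v n) (g *v u) (g *v v)" by (simp only: omega_phi gn)
    also have "\<dots> = phi n u v" by (rule gphi)
    also have "\<dots> = phi u v n" by (rule phi_cyc)
    also have "\<dots> = inner (cross7 u v) n" by (rule cross_inner[symmetric])
    finally show ?thesis by (simp add: inner_commute)
  qed
  have C: "\<forall>w\<in>{w1, w2, w3}. coord (g *v w t) 1 = 0" for t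
    using zero[of t] by (simp add: gcoord' a1_def a2_def a3_def)
  have O: "\<forall>w\<in>{w1, w2, w3}. \<forall>w'\<in>{w1, w2, w3}. omega (g *v w t) (g *v w' t) = 0" for t
    using zero[of t] cross_anti[of "w1 t" "w2 t"] cross_anti[of "w1 t" "w3 t"] cross_anti[of "w2 t" "w3 t"]
    by (simp add: gom b1_def b2_def b3_def)
  have cc: "cross7 (g *v u t) (g *v v t) = crossC (g *v u t) (g *v v t)"
    if "u \<in> {w1, w2, w3}" "v \<in> {w1, w2, w3}" for u v t
  proof -
    have "coord (g *v u t) 1 = 0" "coord (g *v v t) 1 = 0" using C[of t] that by auto
    then have "(g *v u t) $ 1 = 0" "(g *v v t) $ 1 = 0" by (simp_all add: coord_def)
    moreover have "omega (g *v u t) (g *v v t) = 0" using O[of t] that by auto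
    ultimately show ?thesis by (simp add: crossC_eq)
  qed
  have D: "((\<lambda>s. g *v w s) has_vector_derivative (c *\<^sub>R crossC (g *v u t) (g *v v t))) (at t)"
    if "(w has_vector_derivative (c *\<^sub>R cross7 (u t) (v t))) (at t)" "u \<in> {w1, w2, w3}" "v \<in> {w1, w2, w3}"
    for w u v c t
    using bounded_linear.has_vector_derivative[OF matrix_vector_mul_bounded_linear that(1), of g]
    by (simp add: matrix_vector_mult_scaleR goodm_cross[OF gg] cc[OF that(2,3)])
  show ?thesis
    apply (rule bexI[of _ g])
    using C O goodm_G2[OF gg] D[where w=w1 and u=w2 and v=w3 and c=2, OF d1] D[where w=w2 and u=w1 and v=w3 and c=2, OF d2]
      D[where w=w3 and u=w1 and v=w2 and c="-2", OF d3]
    by auto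
qed

end
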